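(* Let $\Sigma$ be a ranked alphabet, $B$ a strong bimonoid and $r:T_\Sigma\to B$. The following are equivalent: (i) there is a crisp-deterministic $(\Sigma,B)$-wta $\mathcal{A}$ with $r=[\![\mathcal{A}]\!]^{\mathrm{init}}$; (ii) there is a finite $(\Sigma,B)$-algebra $\mathcal{K}$ with $r=[\![\mathcal{K}]\!]$; (iii) $r$ is a $(\Sigma,B)$-recognizable step mapping in normal form; (iv) $r$ is a $(\Sigma,B)$-recognizable step mapping; (v) $\mathrm{im}(r)$ is finite and for each $b\in B$ the tree language $r^{-1}(b)=\{\xi\in T_\Sigma\mid r(\xi)=b\}$ is recognizable.
   Context: Ranked alphabet $\Sigma$ ($\Sigma^{(0)}\ne\emptyset$), trees $T_\Sigma$; strong bimonoid $(B,\oplus,\otimes,\mathbb{0},\mathbb{1})$ ($(B,\oplus,\mathbb{0})$ commutative monoid, $(B,\otimes,\mathbb{1})$ monoid, $\mathbb{0}\ne\mathbb{1}$, $\mathbb{0}$ absorbing; no distributivity). A tree language $L\subseteq T_\Sigma$ is recognizable if it is accepted by some finite-state tree automaton. A $(\Sigma,B)$-wta $\mathcal{A}=(Q,\delta,F)$: $Q$ finite nonempty, $\delta_k:Q^k\times\Sigma^{(k)}\times Q\to B$, $F:Q\to B$; $h_{\mathrm{V}(\mathcal{A})}(\sigma(\xi_1,\dots,\xi_k))_q=\bigoplus_{q_1,\dots,q_k}\big(\bigotimes_{i=1}^k h_{\mathrm{V}(\mathcal{A})}(\xi_i)_{q_i}\big)\otimes\delta_k(q_1\dots q_k,\sigma,q)$;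 $[\![\mathcal{A}]\!]^{\mathrm{init}}(\xi)=\bigoplus_q h_{\mathrm{V}(\mathcal{A})}(\xi)_q\otimes F_q$. $\mathcal{A}$ is crisp-deterministic if for all $k,\sigma\in\Sigma^{(k)},q_1,\dots,q_k$ there is a unique $q$ with $\delta_k(q_1\dots q_k,\sigma,q)=\mathbb{1}$ and all other values $\delta_k(q_1\dots q_k,\sigma,q')$ are $\mathbb{0}$. A $(\Sigma,B)$-algebra is $\mathcal{K}=(Q,\theta,F)$, $(Q,\theta)$ a $\Sigma$-algebra, $F:Q\to B$; finite if $Q$ finite; $[\![\mathcal{K}]\!]=F\circ h_{\mathcal{K}}$ with $h_{\mathcal{K}}$ the unique homomorphism from the term algebra $T_\Sigma$. For $L\subseteq T_\Sigma$, $\mathbb{1}_{(B,L)}(\xi)=\mathbb{1}$ if $\xi\in L$ and $\mathbb{0}$ otherwise. $r$ is a $(\Sigma,B)$-recognizable step mapping if $r=\bigoplus_{i=1}^n b_i\otimes\mathbb{1}_{(B,L_i)}$ (pointwise) for some $n\ge1$, recognizable $L_1,\dots,L_n\subseteq T_\Sigma$ and $b_1,\dots,b_n\in B$; it is in normal form if moreover $(L_i)_{i\in[n]}$ is a partition of $T_\Sigma$. *)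

theory Defs
  imports Main
begin

datatype 'f rtree = Node 'f "'f rtree list"

inductive_set trees :: "'f set \<Rightarrow> ('f \<Rightarrow> nat) \<Rightarrow> 'f rtree set"
  for \<Sigma> :: "'f set" and rk :: "'f \<Rightarrow> nat" where
  "f \<in> \<Sigma> \<Longrightarrow> rk f = length ts \<Longrightarrow> (\<forall>t\<in>set ts. t \<in> trees \<Sigma> rk)
     \<Longrightarrow> Node f ts \<in> trees \<Sigma> rk"

definition strong_bimonoid ::
  "('b \<Rightarrow> 'b \<Rightarrow> 'b) \<Rightarrow> ('b \<Rightarrow> 'b \<Rightarrow> 'b) \<Rightarrow> 'b \<Rightarrow> 'b \<Rightarrow> bool" where
  "strong_bimonoid pl mu z one \<longleftrightarrow>
     (\<forall>a b c. pl (pl a b) c = pl a (pl b c)) \<and> (\<forall>a b. pl a b = pl b a) \<and>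
     (\<forall>a. pl z a = a) \<and>
     (\<forall>a b c. mu (mu a b) c = mu a (mu b c)) \<and>
     (\<forall>a. mu one a = a \<and> mu a one = a) \<and>
     z \<noteq> one \<and> (\<forall>a. mu z a = z \<and> mu a z = z)"

abbreviation bsum :: "('b \<Rightarrow> 'b \<Rightarrow> 'b) \<Rightarrow> 'b \<Rightarrow> ('a \<Rightarrow> 'b) \<Rightarrow> 'a set \<Rightarrow> 'b" where
  "bsum pl z \<equiv> comm_monoid_set.F pl z"

definition bprod :: "('b \<Rightarrow> 'b \<Rightarrow> 'b) \<Rightarrow> 'b \<Rightarrow> 'b list \<Rightarrow> 'b" where
  "bprod mu one bs = foldr mu bs one"

definition strings :: "'q set \<Rightarrow> nat \<Rightarrow> 'q list set" where
  "strings Q k = {qs. set qs \<subseteq> Q \<and> length qs = k}"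

inductive reach :: "(nat list \<times> 'f \<times> nat) set \<Rightarrow> 'f rtree \<Rightarrow> nat \<Rightarrow> bool"
  for \<delta> :: "(nat list \<times> 'f \<times> nat) set" where
  "(qs, f, q) \<in> \<delta> \<Longrightarrow> length qs = length ts \<Longrightarrow>
     (\<forall>i<length ts. reach \<delta> (ts ! i) (qs ! i)) \<Longrightarrow> reach \<delta> (Node f ts) q"

definition recognizable :: "'f set \<Rightarrow> ('f \<Rightarrow> nat) \<Rightarrow> 'f rtree set \<Rightarrow> bool" where
  "recognizable \<Sigma> rk L \<longleftrightarrow> L \<subseteq> trees \<Sigma> rk \<and>
     (\<exists>(Q::nat set) \<delta> F. finite Q \<and> F \<subseteq> Q \<and>
        (\<forall>(qs, f, q) \<in> \<delta>. set qs \<subseteq> Q \<and> q \<in> Q \<and> f \<in> \<Sigma> \<and> rk f = length qs) \<and>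
        L = {t \<in> trees \<Sigma> rk. \<exists>q\<in>F. reach \<delta> t q})"

text \<open>A (Sigma,B)-wta (Q, delta, F): Q finite nonempty set of states (naturals),
delta qs f q = delta_k(q1...qk, f, q), F final weights.
wta_h computes the vector h_V(A)(xi) (as a function on states).\<close>

fun wta_h :: "('b \<Rightarrow> 'b \<Rightarrow> 'b) \<Rightarrow> ('b \<Rightarrow> 'b \<Rightarrow> 'b) \<Rightarrow> 'b \<Rightarrow> 'b \<Rightarrow> nat set \<Rightarrow>
    (nat list \<Rightarrow> 'f \<Rightarrow> nat \<Rightarrow> 'b) \<Rightarrow> 'f rtree \<Rightarrow> nat \<Rightarrow> 'b" where
  "wta_h pl mu z one Q \<delta> (Node f ts) =
     (\<lambda>q. bsum pl z
        (\<lambda>qs. mu (bprod mu one (map2 (\<lambda>v p. v p) (map (wta_h pl mu z one Q \<delta>) ts) qs))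
                 (\<delta> qs f q))
        (strings Q (length ts)))"

definition wta_sem :: "('b \<Rightarrow> 'b \<Rightarrow> 'b) \<Rightarrow> ('b \<Rightarrow> 'b \<Rightarrow> 'b) \<Rightarrow> 'b \<Rightarrow> 'b \<Rightarrow> nat set \<Rightarrow>
    (nat list \<Rightarrow> 'f \<Rightarrow> nat \<Rightarrow> 'b) \<Rightarrow> (nat \<Rightarrow> 'b) \<Rightarrow> 'f rtree \<Rightarrow> 'b" where
  "wta_sem pl mu z one Q \<delta> F t = bsum pl z (\<lambda>q. mu (wta_h pl mu z one Q \<delta> t q) (F q)) Q"

definition is_wta :: "'f set \<Rightarrow> ('f \<Rightarrow> nat) \<Rightarrow> nat set \<Rightarrow> bool" where
  "is_wta \<Sigma> rk Q \<longleftrightarrow> finite Q \<and> Q \<noteq> {}"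

definition crisp_deterministic :: "'f set \<Rightarrow> ('f \<Rightarrow> nat) \<Rightarrow> 'b \<Rightarrow> 'b \<Rightarrow> nat set \<Rightarrow>
    (nat list \<Rightarrow> 'f \<Rightarrow> nat \<Rightarrow> 'b) \<Rightarrow> bool" where
  "crisp_deterministic \<Sigma> rk z one Q \<delta> \<longleftrightarrow>
     (\<forall>f\<in>\<Sigma>. \<forall>qs\<in>strings Q (rk f).
        \<exists>q\<in>Q. \<delta> qs f q = one \<and> (\<forall>q'\<in>Q. q' \<noteq> q \<longrightarrow> \<delta> qs f q' = z))"

definition is_finite_algebra :: "'f set \<Rightarrow> ('f \<Rightarrow> nat) \<Rightarrow> nat set \<Rightarrow> ('f \<Rightarrow> nat list \<Rightarrow> nat) \<Rightarrow> bool" where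
  "is_finite_algebra \<Sigma> rk Q \<theta> \<longleftrightarrow> finite Q \<and>
     (\<forall>f\<in>\<Sigma>. \<forall>qs\<in>strings Q (rk f). \<theta> f qs \<in> Q)"

fun alg_h :: "('f \<Rightarrow> nat list \<Rightarrow> nat) \<Rightarrow> 'f rtree \<Rightarrow> nat" where
  "alg_h \<theta> (Node f ts) = \<theta> f (map (alg_h \<theta>) ts)"

definition indic :: "'b \<Rightarrow> 'b \<Rightarrow> 'a set \<Rightarrow> 'a \<Rightarrow> 'b" where
  "indic z one L x = (if x \<in> L then one else z)"

definition step_mapping :: "'f set \<Rightarrow> ('f \<Rightarrow> nat) \<Rightarrow> ('b \<Rightarrow> 'b \<Rightarrow> 'b) \<Rightarrow> ('b \<Rightarrow> 'b \<Rightarrow> 'b) \<Rightarrow>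
    'b \<Rightarrow> 'b \<Rightarrow> ('f rtree \<Rightarrow> 'b) \<Rightarrow> bool" where
  "step_mapping \<Sigma> rk pl mu z one r \<longleftrightarrow>
     (\<exists>n::nat. \<exists>L::nat \<Rightarrow> 'f rtree set. \<exists>b::nat \<Rightarrow> 'b. n \<ge> 1 \<and>
        (\<forall>i<n. recognizable \<Sigma> rk (L i)) \<and>
        (\<forall>t\<in>trees \<Sigma> rk. r t = bsum pl z (\<lambda>i. mu (b i) (indic z one (L i) t)) {..<n}))"

definition step_mapping_nf :: "'f set \<Rightarrow> ('f \<Rightarrow> nat) \<Rightarrow> ('b \<Rightarrow> 'b \<Rightarrow> 'b) \<Rightarrow> ('b \<Rightarrow> 'b \<Rightarrow> 'b) \<Rightarrow>
    'b \<Rightarrow> 'b \<Rightarrow> ('f rtree \<Rightarrow> 'b) \<Rightarrow> bool" where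
  "step_mapping_nf \<Sigma> rk pl mu z one r \<longleftrightarrow>
     (\<exists>n::nat. \<exists>L::nat \<Rightarrow> 'f rtree set. \<exists>b::nat \<Rightarrow> 'b. n \<ge> 1 \<and>
        (\<forall>i<n. recognizable \<Sigma> rk (L i)) \<and>
        (\<forall>i<n. \<forall>j<n. i \<noteq> j \<longrightarrow> L i \<inter> L j = {}) \<and>
        (\<Union>i<n. L i) = trees \<Sigma> rk \<and>
        (\<forall>t\<in>trees \<Sigma> rk. r t = bsum pl z (\<lambda>i. mu (b i) (indic z one (L i) t)) {..<n}))"

end

theory Submission
  imports Defs "HOL-Library.Nat_Bijection"
begin

definition alg_rec :: "'f set \<Rightarrow> ('f \<Rightarrow> nat) \<Rightarrow> 'f rtree set \<Rightarrow> bool" where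
  "alg_rec \<Sigma> rk L \<longleftrightarrow> (\<exists>Q \<theta> F. is_finite_algebra \<Sigma> rk Q \<theta> \<and> L = {t \<in> trees \<Sigma> rk. alg_h \<theta> t \<in> F})"

lemma alg_h_in:
  assumes "is_finite_algebra \<Sigma> rk Q \<theta>" "t \<in> trees \<Sigma> rk"
  shows "alg_h \<theta> t \<in> Q"
  using assms(2)
proof (induction t rule: trees.induct)
  case (1 f ts)
  have "map (alg_h \<theta>) ts \<in> strings Q (rk f)"
    using 1 by (auto simp: strings_def)
  then show ?case using assms(1) 1 by (auto simp: is_finite_algebra_def)
qed

lemma finite_strings: "finite Q \<Longrightarrow> finite (strings Q k)"
  unfolding strings_def by (rule finite_lists_length_eq)

lemma alg_rec_imp_rec:
  assumes "alg_rec \<Sigma> rk L"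
  shows "recognizable \<Sigma> rk L"
proof -
  obtain Q \<theta> F where A: "is_finite_algebra \<Sigma> rk Q \<theta>" and L: "L = {t \<in> trees \<Sigma> rk. alg_h \<theta> t \<in> F}"
    using assms unfolding alg_rec_def by blast
  define \<delta> where "\<delta> = {(qs, f, \<theta> f qs) | f qs. f \<in> \<Sigma> \<and> qs \<in> strings Q (rk f)}"
  have r1: "reach \<delta> t (alg_h \<theta> t)" if "t \<in> trees \<Sigma> rk" for t
    using that
  proof (induction t rule: trees.induct)
    case (1 f ts)
    have "map (alg_h \<theta>) ts \<in> strings Q (rk f)"
      using 1 alg_h_in[OF A] by (auto simp: strings_def)
    then have "(map (alg_h \<theta>) ts, f, alg_h \<theta> (Node f ts)) \<in> \<delta>"
      using 1 by (auto simp: \<delta>_def)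
    then show ?case
      by (rule reach.intros) (use 1 in auto)
  qed
  have r2: "q = alg_h \<theta> t" if "reach \<delta> t q" for t q
    using that
  proof (induction rule: reach.induct)
    case (1 qs f q ts)
    then have "qs = map (alg_h \<theta>) ts" by (auto intro: nth_equalityI)
    then show ?case using 1 by (auto simp: \<delta>_def)
  qed
  have "L \<subseteq> trees \<Sigma> rk" using L by auto
  moreover have "finite Q" using A by (auto simp: is_finite_algebra_def)
  moreover have "F \<inter> Q \<subseteq> Q" by auto
  moreover have "\<forall>(qs, f, q) \<in> \<delta>. set qs \<subseteq> Q \<and> q \<in> Q \<and> f \<in> \<Sigma> \<and> rk f = length qs"
    using A by (auto simp: \<delta>_def strings_def is_finite_algebra_def)
  moreover have "L = {t \<in> trees \<Sigma> rk. \<exists>q\<in>F \<inter> Q. reach \<delta> t q}"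
    using L r1 r2 alg_h_in[OF A] by blast
  ultimately show ?thesis unfolding recognizable_def by blast
qed

lemma rec_imp_alg_rec:
  assumes "recognizable \<Sigma> rk L"
  shows "alg_rec \<Sigma> rk L"
proof -
  obtain Q :: "nat set" and \<delta> F where fQ: "finite Q" and FQ: "F \<subseteq> Q"
    and W: "\<forall>(qs, f, q) \<in> \<delta>. set qs \<subseteq> Q \<and> q \<in> Q \<and> f \<in> \<Sigma> \<and> rk f = length qs"
    and L: "L = {t \<in> trees \<Sigma> rk. \<exists>q\<in>F. reach \<delta> t q}"
    using assms unfolding recognizable_def by blast
  define \<theta> where "\<theta> = (\<lambda>f qs. set_encode {q \<in> Q. \<exists>ps. (ps, f, q) \<in> \<delta> \<and> length ps = length qs \<and>
        (\<forall>i<length qs. ps ! i \<in> set_decode (qs ! i))})"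
  define Q' where "Q' = set_encode ` Pow Q"
  have A: "is_finite_algebra \<Sigma> rk Q' \<theta>"
    using fQ unfolding is_finite_algebra_def Q'_def \<theta>_def by auto
  have rQ: "q \<in> Q" if "reach \<delta> t q" for t q
    using that by (cases rule: reach.cases) (use W in auto)
  have key: "set_decode (alg_h \<theta> t) = {q. reach \<delta> t q}" if "t \<in> trees \<Sigma> rk" for t
    using that
  proof (induction t rule: trees.induct)
    case (1 f ts)
    have fin: "finite {q \<in> Q. \<exists>ps. (ps, f, q) \<in> \<delta> \<and> length ps = length (map (alg_h \<theta>) ts) \<and>
        (\<forall>i<length (map (alg_h \<theta>) ts). ps ! i \<in> set_decode (map (alg_h \<theta>) ts ! i))}"
      using fQ by auto
    have IH: "\<forall>i<length ts. set_decode (alg_h \<theta> (ts ! i)) = {q. reach \<delta> (ts ! i) q}"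
      using 1 by auto
    have "set_decode (alg_h \<theta> (Node f ts)) = {q \<in> Q. \<exists>ps. (ps, f, q) \<in> \<delta> \<and> length ps = length ts \<and>
        (\<forall>i<length ts. reach \<delta> (ts ! i) (ps ! i))}"
    proof -
      let ?S = "{q \<in> Q. \<exists>ps. (ps, f, q) \<in> \<delta> \<and> length ps = length ts \<and>
        (\<forall>i<length ts. reach \<delta> (ts ! i) (ps ! i))}"
      have "alg_h \<theta> (Node f ts) = set_encode ?S"
        using IH by (simp add: \<theta>_def)
      moreover have "finite ?S" using fQ by auto
      ultimately show ?thesis by simp
    qed
    also have "\<dots> = {q. reach \<delta> (Node f ts) q}"
    proof (intro set_eqI iffI)
      fix q assume "q \<in> {q \<in> Q. \<exists>ps. (ps, f, q) \<in> \<delta> \<and> length ps = length ts \<and>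
        (\<forall>i<length ts. reach \<delta> (ts ! i) (ps ! i))}"
      then show "q \<in> {q. reach \<delta> (Node f ts) q}" by (auto intro: reach.intros)
    next
      fix q assume "q \<in> {q. reach \<delta> (Node f ts) q}"
      then have "reach \<delta> (Node f ts) q" by simp
      then show "q \<in> {q \<in> Q. \<exists>ps. (ps, f, q) \<in> \<delta> \<and> length ps = length ts \<and>
        (\<forall>i<length ts. reach \<delta> (ts ! i) (ps ! i))}"
      proof -
        obtain qs where q1: "(qs,f,q)\<in>\<delta>" "length qs = length ts" "\<forall>i<length ts. reach \<delta> (ts ! i) (qs ! i)"
          using \<open>reach \<delta> (Node f ts) q\<close> by (cases rule: reach.cases) auto
        moreover have "q \<in> Q" using W q1(1) by blast
        ultimately show ?thesis by blast
      qed
    qed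
    finally show ?case .
  qed
  define F' where "F' = {x. set_decode x \<inter> F \<noteq> {}}"
  have "L = {t \<in> trees \<Sigma> rk. alg_h \<theta> t \<in> F'}"
    using L key unfolding F'_def by auto
  then show ?thesis using A unfolding alg_rec_def by blast
qed

lemma rec_iff: "recognizable \<Sigma> rk L \<longleftrightarrow> alg_rec \<Sigma> rk L"
  using rec_imp_alg_rec alg_rec_imp_rec by blast

definition prod_alg :: "nat \<Rightarrow> (nat \<Rightarrow> 'f \<Rightarrow> nat list \<Rightarrow> nat) \<Rightarrow> 'f \<Rightarrow> nat list \<Rightarrow> nat" where
  "prod_alg n \<Theta> = (\<lambda>f qs. list_encode (map (\<lambda>i. \<Theta> i f (map (\<lambda>q. list_decode q ! i) qs)) [0..<n]))"

lemma prod_alg_apply: "prod_alg n \<Theta> f qs = list_encode (map (\<lambda>i. \<Theta> i f (map (\<lambda>q. list_decode q ! i) qs)) [0..<n])"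
  by (simp add: prod_alg_def)

lemma prod_alg_h: "alg_h (prod_alg n \<Theta>) t = list_encode (map (\<lambda>i. alg_h (\<Theta> i) t) [0..<n])"
proof (induction t)
  case (Node f ts)
  have "map (\<lambda>q. list_decode q ! i) (map (alg_h (prod_alg n \<Theta>)) ts) = map (alg_h (\<Theta> i)) ts"
    if "i < n" for i
    using Node that by auto
  note inner = this
  then have "map (\<lambda>i. \<Theta> i f (map (\<lambda>q. list_decode q ! i) (map (alg_h (prod_alg n \<Theta>)) ts))) [0..<n]
      = map (\<lambda>i. \<Theta> i f (map (alg_h (\<Theta> i)) ts)) [0..<n]"
    by (intro map_cong refl) (subst inner, auto)
  then show ?case
    apply (subst alg_h.simps)
    apply (rule trans[OF prod_alg_apply])
    apply (rule arg_cong[where f=list_encode])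
    by simp
qed

lemma prod_alg_fin:
  assumes "\<forall>i<n. is_finite_algebra \<Sigma> rk (QQ i) (\<Theta> i)"
  shows "is_finite_algebra \<Sigma> rk (list_encode ` {v. length v = n \<and> (\<forall>i<n. v ! i \<in> QQ i)}) (prod_alg n \<Theta>)"
proof -
  have fin: "finite (\<Union>i<n. QQ i)" using assms by (auto simp: is_finite_algebra_def)
  have "{v. length v = n \<and> (\<forall>i<n. v ! i \<in> QQ i)} \<subseteq> {v. set v \<subseteq> (\<Union>i<n. QQ i) \<and> length v = n}"
    by (force simp: in_set_conv_nth)
  then have f2: "finite {v. length v = n \<and> (\<forall>i<n. v ! i \<in> QQ i)}"
    using finite_lists_length_eq[OF fin] finite_subset by blast
  have "prod_alg n \<Theta> f qs \<in> list_encode ` {v. length v = n \<and> (\<forall>i<n. v ! i \<in> QQ i)}"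
    if "f \<in> \<Sigma>" "qs \<in> strings (list_encode ` {v. length v = n \<and> (\<forall>i<n. v ! i \<in> QQ i)}) (rk f)" for f qs
  proof -
    have "map (\<lambda>q. list_decode q ! i) qs \<in> strings (QQ i) (rk f)" if "i < n" for i
      using \<open>qs \<in> _\<close> that by (auto simp: strings_def)
    then have "\<forall>i<n. \<Theta> i f (map (\<lambda>q. list_decode q ! i) qs) \<in> QQ i"
      using assms \<open>f \<in> \<Sigma>\<close> by (auto simp: is_finite_algebra_def)
    then show ?thesis unfolding prod_alg_def by (intro imageI) auto
  qed
  then show ?thesis using f2 unfolding is_finite_algebra_def by auto
qed


lemma sb_cm:
  assumes "strong_bimonoid pl mu z one"
  shows "comm_monoid_set pl z"
proof -
  have a: "\<And>a b c. pl (pl a b) c = pl a (pl b c)" and c: "\<And>a b. pl a b = pl b a"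
    and n: "\<And>a. pl z a = a"
    using assms unfolding strong_bimonoid_def by auto
  show ?thesis
    by unfold_locales (metis a c n)+
qed

lemma sb_mu:
  assumes "strong_bimonoid pl mu z one"
  shows "mu one a = a" "mu a one = a" "mu z a = z" "mu a z = z" "z \<noteq> one"
  using assms unfolding strong_bimonoid_def by auto

lemma bprod01:
  assumes sb: "strong_bimonoid pl mu z one" and "\<forall>x\<in>set xs. x = one \<or> x = z"
  shows "bprod mu one xs = (if \<forall>x\<in>set xs. x = one then one else z)"
  using assms(2)
proof (induction xs)
  case Nil
  then show ?case by (simp add: bprod_def)
next
  case (Cons a xs)
  then show ?case using sb_mu[OF sb] by (auto simp: bprod_def)
qed

lemma bprod_ind:
  assumes sb: "strong_bimonoid pl mu z one" and len: "length qs = length ts"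
    and Hi: "\<forall>i<length ts. H (ts ! i) (qs ! i) = (if qs ! i = g (ts ! i) then one else z)"
  shows "bprod mu one (map2 (\<lambda>v p. v p) (map H ts) qs) = (if qs = map g ts then one else z)"
proof -
  let ?xs = "map2 (\<lambda>v p. v p) (map H ts) qs"
  have xe: "?xs = map (\<lambda>i. H (ts ! i) (qs ! i)) [0..<length ts]"
    by (rule nth_equalityI) (use len in auto)
  have sx: "set ?xs = {H (ts ! i) (qs ! i) | i. i < length ts}"
    unfolding xe by auto
  have h01: "H (ts ! i) (qs ! i) = one \<or> H (ts ! i) (qs ! i) = z" if "i < length ts" for i
    using Hi that by simp
  have "\<forall>x\<in>set ?xs. x = one \<or> x = z" using sx h01 by auto
  then have "bprod mu one ?xs = (if \<forall>x\<in>set ?xs. x = one then one else z)"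
    by (rule bprod01[OF sb])
  moreover have "(\<forall>x\<in>set ?xs. x = one) \<longleftrightarrow> (\<forall>i<length ts. qs ! i = g (ts ! i))"
  proof -
    have e1: "(\<forall>x\<in>set ?xs. x = one) \<longleftrightarrow> (\<forall>i<length ts. H (ts ! i) (qs ! i) = one)"
      unfolding sx by blast
    have e2: "H (ts ! i) (qs ! i) = one \<longleftrightarrow> qs ! i = g (ts ! i)" if "i < length ts" for i
      using Hi that sb_mu(5)[OF sb] by auto
    show ?thesis unfolding e1 using e2 by blast
  qed
  moreover have "(\<forall>i<length ts. qs ! i = g (ts ! i)) \<longleftrightarrow> qs = map g ts"
    using len by (auto simp: list_eq_iff_nth_eq)
  ultimately show ?thesis by simp
qed

lemma wta_det:
  assumes sb: "strong_bimonoid pl mu z one" and A: "is_finite_algebra \<Sigma> rk Q \<theta>"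
    and D: "\<forall>f\<in>\<Sigma>. \<forall>qs\<in>strings Q (rk f). \<forall>q\<in>Q. \<delta> qs f q = (if q = \<theta> f qs then one else z)"
    and t: "t \<in> trees \<Sigma> rk"
  shows "\<forall>q\<in>Q. wta_h pl mu z one Q \<delta> t q = (if q = alg_h \<theta> t then one else z)"
  using t
proof (induction t rule: trees.induct)
  case (1 f ts)
  have cm: "comm_monoid_set pl z" by (rule sb_cm[OF sb])
  have fQ: "finite Q" using A by (simp add: is_finite_algebra_def)
  let ?m = "map (alg_h \<theta>) ts"
  have mS: "?m \<in> strings Q (length ts)"
    using 1 alg_h_in[OF A] by (auto simp: strings_def)
  show ?case
  proof
    fix q assume q: "q \<in> Q"
    have "wta_h pl mu z one Q \<delta> (Node f ts) q =
      bsum pl z (\<lambda>qs. mu (bprod mu one (map2 (\<lambda>v p. v p) (map (wta_h pl mu z one Q \<delta>) ts) qs)) (\<delta> qs f q))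
        (strings Q (length ts))" by simp
    also have "\<dots> = bsum pl z (\<lambda>qs. if qs = ?m then \<delta> ?m f q else z) (strings Q (length ts))"
    proof (rule comm_monoid_set.cong[OF cm refl])
      fix qs assume qs: "qs \<in> strings Q (length ts)"
      have "\<forall>i<length ts. wta_h pl mu z one Q \<delta> (ts ! i) (qs ! i) = (if qs ! i = alg_h \<theta> (ts ! i) then one else z)"
      proof (intro allI impI)
        fix i assume i: "i < length ts"
        have "ts ! i \<in> set ts" using i by simp
        moreover have "qs ! i \<in> Q" using qs i by (auto simp: strings_def)
        ultimately show "wta_h pl mu z one Q \<delta> (ts ! i) (qs ! i) = (if qs ! i = alg_h \<theta> (ts ! i) then one else z)"
          using 1(3) by blast
      qed
      then have "bprod mu one (map2 (\<lambda>v p. v p) (map (wta_h pl mu z one Q \<delta>) ts) qs) = (if qs = ?m then one else z)"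
        using qs by (intro bprod_ind[OF sb]) (auto simp: strings_def)
      then show "mu (bprod mu one (map2 (\<lambda>v p. v p) (map (wta_h pl mu z one Q \<delta>) ts) qs)) (\<delta> qs f q) =
           (if qs = ?m then \<delta> ?m f q else z)"
        using sb_mu[OF sb] by simp
    qed
    also have "\<dots> = \<delta> ?m f q"
      using comm_monoid_set.delta[OF cm finite_strings[OF fQ]] mS by simp
    also have "\<dots> = (if q = alg_h \<theta> (Node f ts) then one else z)"
      using D 1 mS q by auto
    finally show "wta_h pl mu z one Q \<delta> (Node f ts) q = (if q = alg_h \<theta> (Node f ts) then one else z)" .
  qed
qed

lemma wta_sem_det:
  assumes sb: "strong_bimonoid pl mu z one" and A: "is_finite_algebra \<Sigma> rk Q \<theta>"
    and D: "\<forall>f\<in>\<Sigma>. \<forall>qs\<in>strings Q (rk f). \<forall>q\<in>Q. \<delta> qs f q = (if q = \<theta> f qs then one else z)"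
    and t: "t \<in> trees \<Sigma> rk"
  shows "wta_sem pl mu z one Q \<delta> F t = F (alg_h \<theta> t)"
proof -
  have cm: "comm_monoid_set pl z" by (rule sb_cm[OF sb])
  have fQ: "finite Q" using A by (simp add: is_finite_algebra_def)
  have W: "\<forall>q\<in>Q. wta_h pl mu z one Q \<delta> t q = (if q = alg_h \<theta> t then one else z)"
    by (rule wta_det[OF sb A D t])
  have "wta_sem pl mu z one Q \<delta> F t = bsum pl z (\<lambda>q. if q = alg_h \<theta> t then F (alg_h \<theta> t) else z) Q"
    unfolding wta_sem_def
    by (rule comm_monoid_set.cong[OF cm refl]) (use W sb_mu[OF sb] in auto)
  also have "\<dots> = F (alg_h \<theta> t)"
    using comm_monoid_set.delta[OF cm fQ] alg_h_in[OF A t] by simp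
  finally show ?thesis .
qed

theorem lemma5p3:
  fixes \<Sigma> :: "'f set" and rk :: "'f \<Rightarrow> nat"
    and pl mu :: "'b \<Rightarrow> 'b \<Rightarrow> 'b" and z one :: 'b
    and r :: "'f rtree \<Rightarrow> 'b"
  assumes "finite \<Sigma>" and "\<exists>f\<in>\<Sigma>. rk f = 0"
    and "strong_bimonoid pl mu z one"
  defines "i \<equiv> (\<exists>Q \<delta> F. is_wta \<Sigma> rk Q \<and> crisp_deterministic \<Sigma> rk z one Q \<delta> \<and>
                 (\<forall>t\<in>trees \<Sigma> rk. r t = wta_sem pl mu z one Q \<delta> F t))"
    and "ii \<equiv> (\<exists>Q \<theta> (F :: nat \<Rightarrow> 'b). is_finite_algebra \<Sigma> rk Q \<theta> \<and>
                 (\<forall>t\<in>trees \<Sigma> rk. r t = F (alg_h \<theta> t)))"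
    and "iii \<equiv> step_mapping_nf \<Sigma> rk pl mu z one r"
    and "iv \<equiv> step_mapping \<Sigma> rk pl mu z one r"
    and "v \<equiv> finite (r ` trees \<Sigma> rk) \<and>
              (\<forall>b. recognizable \<Sigma> rk {t \<in> trees \<Sigma> rk. r t = b})"
  shows "(i \<longleftrightarrow> ii) \<and> (ii \<longleftrightarrow> iii) \<and> (iii \<longleftrightarrow> iv) \<and> (iv \<longleftrightarrow> v)"
proof -
  note sb = assms(3)
  have cm: "comm_monoid_set pl z" by (rule sb_cm[OF sb])
  obtain f0 where f0: "f0 \<in> \<Sigma>" "rk f0 = 0" using assms(2) by blast
  have t0: "Node f0 [] \<in> trees \<Sigma> rk" using f0 by (auto intro: trees.intros)
  have Qne: "Q \<noteq> {}" if "is_finite_algebra \<Sigma> rk Q \<theta>" for Q \<theta>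
    using alg_h_in[OF that t0] by auto
  have i_ii: "i \<Longrightarrow> ii"
  proof -
    assume i
    then obtain Q \<delta> F where W: "is_wta \<Sigma> rk Q" and C: "crisp_deterministic \<Sigma> rk z one Q \<delta>"
      and R: "\<forall>t\<in>trees \<Sigma> rk. r t = wta_sem pl mu z one Q \<delta> F t"
      unfolding i_def by blast
    define \<theta> where "\<theta> = (\<lambda>f qs. SOME q. q \<in> Q \<and> \<delta> qs f q = one)"
    have H: "\<theta> f qs \<in> Q \<and> (\<forall>q\<in>Q. \<delta> qs f q = (if q = \<theta> f qs then one else z))"
      if fs: "f \<in> \<Sigma>" "qs \<in> strings Q (rk f)" for f qs
    proof -
      obtain q0 where q0: "q0 \<in> Q" "\<delta> qs f q0 = one" "\<forall>q'\<in>Q. q' \<noteq> q0 \<longrightarrow> \<delta> qs f q' = z"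
        using C[unfolded crisp_deterministic_def, rule_format, OF fs] by blast
      have th: "\<theta> f qs \<in> Q \<and> \<delta> qs f (\<theta> f qs) = one"
        unfolding \<theta>_def by (rule someI[of _ q0]) (use q0 in simp)
      have "\<theta> f qs = q0"
      proof (rule ccontr)
        assume "\<theta> f qs \<noteq> q0"
        then have "\<delta> qs f (\<theta> f qs) = z" using q0(3) th by blast
        then show False using th sb_mu(5)[OF sb] by simp
      qed
      note eq = this
      show ?thesis
      proof (intro conjI ballI)
        show "\<theta> f qs \<in> Q" using th by blast
        fix q assume q: "q \<in> Q"
        show "\<delta> qs f q = (if q = \<theta> f qs then one else z)"
        proof (cases "q = \<theta> f qs")
          case True
          then show ?thesis using th by simp
        next
          case False
          then have "q \<noteq> q0" using eq by simp
          then show ?thesis using q0(3) q False by simp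
        qed
      qed
    qed
    have A: "is_finite_algebra \<Sigma> rk Q \<theta>"
      unfolding is_finite_algebra_def
    proof
      show "finite Q" using W by (simp add: is_wta_def)
      show "\<forall>f\<in>\<Sigma>. \<forall>qs\<in>strings Q (rk f). \<theta> f qs \<in> Q" using H by blast
    qed
    have D: "\<forall>f\<in>\<Sigma>. \<forall>qs\<in>strings Q (rk f). \<forall>q\<in>Q. \<delta> qs f q = (if q = \<theta> f qs then one else z)"
      using H by blast
    have "\<forall>t\<in>trees \<Sigma> rk. r t = F (alg_h \<theta> t)"
    proof
      fix t assume t: "t \<in> trees \<Sigma> rk"
      show "r t = F (alg_h \<theta> t)" using R t wta_sem_det[OF sb A D t, of F] by simp
    qed
    then show ii unfolding ii_def using A by blast
  qed
  have ii_i: "ii \<Longrightarrow> i"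
  proof -
    assume ii
    then obtain Q \<theta> F where A: "is_finite_algebra \<Sigma> rk Q \<theta>"
      and R: "\<forall>t\<in>trees \<Sigma> rk. r t = F (alg_h \<theta> t)"
      unfolding ii_def by blast
    define \<delta> where "\<delta> = (\<lambda>qs f q. if q = \<theta> f qs then one else z)"
    have W: "is_wta \<Sigma> rk Q" using A Qne[OF A] by (simp add: is_wta_def is_finite_algebra_def)
    have C: "crisp_deterministic \<Sigma> rk z one Q \<delta>"
      using A unfolding crisp_deterministic_def is_finite_algebra_def \<delta>_def by auto
    have "\<forall>t\<in>trees \<Sigma> rk. r t = wta_sem pl mu z one Q \<delta> F t"
      using R wta_sem_det[OF sb A, of \<delta>] by (simp add: \<delta>_def)
    then show i unfolding i_def using W C by blast
  qed
  have ii_iii: "ii \<Longrightarrow> iii"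
  proof -
    assume ii
    then obtain Q \<theta> F where A: "is_finite_algebra \<Sigma> rk Q \<theta>"
      and R: "\<forall>t\<in>trees \<Sigma> rk. r t = F (alg_h \<theta> t)"
      unfolding ii_def by blast
    have fQ: "finite Q" using A by (simp add: is_finite_algebra_def)
    define n where "n = card Q"
    have n1: "n \<ge> 1" using Qne[OF A] fQ unfolding n_def
      by (simp add: Suc_le_eq card_gt_0_iff)
    obtain e where e: "bij_betw e {..<n} Q"
      using ex_bij_betw_nat_finite[OF fQ] unfolding n_def atLeast0LessThan by blast
    define L where "L = (\<lambda>i. {t \<in> trees \<Sigma> rk. alg_h \<theta> t = e i})"
    define b where "b = (\<lambda>i. F (e i))"
    have rec: "\<forall>i<n. recognizable \<Sigma> rk (L i)"
    proof (intro allI impI)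
      fix i assume "i < n"
      have "L i = {t \<in> trees \<Sigma> rk. alg_h \<theta> t \<in> {e i}}" unfolding L_def by simp
      then have "alg_rec \<Sigma> rk (L i)" using A unfolding alg_rec_def by blast
      then show "recognizable \<Sigma> rk (L i)" by (rule alg_rec_imp_rec)
    qed
    have inj: "inj_on e {..<n}" using e by (rule bij_betw_imp_inj_on)
    have im: "e ` {..<n} = Q" using e by (rule bij_betw_imp_surj_on)
    have disj: "\<forall>i<n. \<forall>j<n. i \<noteq> j \<longrightarrow> L i \<inter> L j = {}"
      using inj unfolding L_def inj_on_def by auto
    have ex: "\<exists>j<n. e j = alg_h \<theta> t" if "t \<in> trees \<Sigma> rk" for t
      using alg_h_in[OF A that] im by force
    have un: "(\<Union>i<n. L i) = trees \<Sigma> rk"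
      using ex unfolding L_def by (auto, metis ex lessThan_iff)
    have sum: "\<forall>t\<in>trees \<Sigma> rk. r t = bsum pl z (\<lambda>i. mu (b i) (indic z one (L i) t)) {..<n}"
    proof
      fix t assume t: "t \<in> trees \<Sigma> rk"
      obtain j where j: "j < n" "e j = alg_h \<theta> t" using ex[OF t] by blast
      have "bsum pl z (\<lambda>i. mu (b i) (indic z one (L i) t)) {..<n} =
            bsum pl z (\<lambda>i. if i = j then F (e j) else z) {..<n}"
      proof (rule comm_monoid_set.cong[OF cm refl])
        fix i assume i: "i \<in> {..<n}"
        have "t \<in> L i \<longleftrightarrow> i = j"
          using t j i inj unfolding L_def inj_on_def by auto
        then show "mu (b i) (indic z one (L i) t) = (if i = j then F (e j) else z)"
          using sb_mu[OF sb] unfolding indic_def b_def by auto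
      qed
      also have "\<dots> = F (e j)" using comm_monoid_set.delta[OF cm finite_lessThan] j by simp
      finally show "r t = bsum pl z (\<lambda>i. mu (b i) (indic z one (L i) t)) {..<n}"
        using R t j by simp
    qed
    show iii unfolding iii_def step_mapping_nf_def
      using n1 rec disj un sum by blast
  qed
  have iii_iv: "iii \<Longrightarrow> iv"
  proof -
    assume iii
    then obtain n :: nat and L b where h: "n \<ge> 1" "\<forall>i<n. recognizable \<Sigma> rk (L i)"
      "\<forall>t\<in>trees \<Sigma> rk. r t = bsum pl z (\<lambda>i. mu (b i) (indic z one (L i) t)) {..<n}"
      unfolding iii_def step_mapping_nf_def by auto
    show iv unfolding iv_def step_mapping_def
      by (rule exI[of _ n], rule exI[of _ L], rule exI[of _ b]) (use h in blast)
  qed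
  have iv_v: "iv \<Longrightarrow> v"
  proof -
    assume iv
    then obtain n :: nat and L b where n1: "n \<ge> 1" and rec: "\<forall>i<n. recognizable \<Sigma> rk (L i)"
      and sum: "\<forall>t\<in>trees \<Sigma> rk. r t = bsum pl z (\<lambda>i. mu (b i) (indic z one (L i) t)) {..<n}"
      unfolding iv_def step_mapping_def by blast
    have "\<forall>i<n. \<exists>Q \<theta> F. is_finite_algebra \<Sigma> rk Q \<theta> \<and> L i = {t \<in> trees \<Sigma> rk. alg_h \<theta> t \<in> F}"
      using rec rec_imp_alg_rec unfolding alg_rec_def by blast
    then have "\<exists>QQ \<Theta> FF. \<forall>i<n. is_finite_algebra \<Sigma> rk (QQ i) (\<Theta> i) \<and>
        L i = {t \<in> trees \<Sigma> rk. alg_h (\<Theta> i) t \<in> FF i}" by (simp only: choice_iff')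
    then obtain QQ \<Theta> FF where AA: "\<forall>i<n. is_finite_algebra \<Sigma> rk (QQ i) (\<Theta> i) \<and>
        L i = {t \<in> trees \<Sigma> rk. alg_h (\<Theta> i) t \<in> FF i}"
      by blast
    define P where "P = prod_alg n \<Theta>"
    define Qp where "Qp = list_encode ` {v. length v = n \<and> (\<forall>i<n. v ! i \<in> QQ i)}"
    have AP: "is_finite_algebra \<Sigma> rk Qp P"
      unfolding P_def Qp_def by (rule prod_alg_fin) (use AA in blast)
    define g where "g = (\<lambda>S. bsum pl z (\<lambda>i. mu (b i) (if i \<in> S then one else z)) {..<n})"
    define S where "S = (\<lambda>x. {i. i < n \<and> list_decode x ! i \<in> FF i})"
    have key: "r t = g (S (alg_h P t))" if t: "t \<in> trees \<Sigma> rk" for t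
    proof -
      have "r t = bsum pl z (\<lambda>i. mu (b i) (indic z one (L i) t)) {..<n}" using sum t by blast
      also have "\<dots> = g (S (alg_h P t))"
        unfolding g_def
      proof (rule comm_monoid_set.cong[OF cm refl])
        fix i assume i: "i \<in> {..<n}"
        have "list_decode (alg_h P t) ! i = alg_h (\<Theta> i) t"
          using i unfolding P_def prod_alg_h by simp
        then have "t \<in> L i \<longleftrightarrow> i \<in> S (alg_h P t)"
          using AA i t unfolding S_def by auto
        then show "mu (b i) (indic z one (L i) t) = mu (b i) (if i \<in> S (alg_h P t) then one else z)"
          unfolding indic_def by simp
      qed
      finally show ?thesis .
    qed
    have "r ` trees \<Sigma> rk \<subseteq> g ` Pow {..<n}"
      using key unfolding S_def by auto
    then have fin: "finite (r ` trees \<Sigma> rk)" by (rule finite_subset) simp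
    have "recognizable \<Sigma> rk {t \<in> trees \<Sigma> rk. r t = b'}" for b'
    proof -
      have "{t \<in> trees \<Sigma> rk. r t = b'} = {t \<in> trees \<Sigma> rk. alg_h P t \<in> {x. g (S x) = b'}}"
        using key by auto
      then have "alg_rec \<Sigma> rk {t \<in> trees \<Sigma> rk. r t = b'}"
        using AP unfolding alg_rec_def by blast
      then show ?thesis by (rule alg_rec_imp_rec)
    qed
    then show v unfolding v_def using fin by blast
  qed
  have v_ii: "v \<Longrightarrow> ii"
  proof -
    assume v
    then have fin: "finite (r ` trees \<Sigma> rk)" and rec: "\<forall>b. recognizable \<Sigma> rk {t \<in> trees \<Sigma> rk. r t = b}"
      unfolding v_def by auto
    obtain bl where bl: "set bl = r ` trees \<Sigma> rk" using finite_list[OF fin] by blast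
    define m where "m = length bl"
    have "\<forall>j<m. \<exists>Q \<theta> F. is_finite_algebra \<Sigma> rk Q \<theta> \<and>
        {t \<in> trees \<Sigma> rk. r t = bl ! j} = {t \<in> trees \<Sigma> rk. alg_h \<theta> t \<in> F}"
      using rec rec_imp_alg_rec unfolding alg_rec_def by blast
    then have "\<exists>QQ \<Theta> FF. \<forall>j<m. is_finite_algebra \<Sigma> rk (QQ j) (\<Theta> j) \<and>
        {t \<in> trees \<Sigma> rk. r t = bl ! j} = {t \<in> trees \<Sigma> rk. alg_h (\<Theta> j) t \<in> FF j}" by (simp only: choice_iff')
    then obtain QQ \<Theta> FF where AA: "\<forall>j<m. is_finite_algebra \<Sigma> rk (QQ j) (\<Theta> j) \<and>
        {t \<in> trees \<Sigma> rk. r t = bl ! j} = {t \<in> trees \<Sigma> rk. alg_h (\<Theta> j) t \<in> FF j}"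
      by blast
    define P where "P = prod_alg m \<Theta>"
    define Qp where "Qp = list_encode ` {v. length v = m \<and> (\<forall>i<m. v ! i \<in> QQ i)}"
    have AP: "is_finite_algebra \<Sigma> rk Qp P"
      unfolding P_def Qp_def by (rule prod_alg_fin) (use AA in blast)
    define Fp where "Fp = (\<lambda>x. bl ! (SOME j. j < m \<and> list_decode x ! j \<in> FF j))"
    have "r t = Fp (alg_h P t)" if t: "t \<in> trees \<Sigma> rk" for t
    proof -
      have dec: "list_decode (alg_h P t) ! j = alg_h (\<Theta> j) t" if "j < m" for j
        using that unfolding P_def prod_alg_h by simp
      have mem: "t \<in> {t \<in> trees \<Sigma> rk. r t = bl ! j} \<longleftrightarrow> alg_h (\<Theta> j) t \<in> FF j" if "j < m" for j
        using AA that t by blast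
      obtain j where j: "j < m" "bl ! j = r t"
        using bl t unfolding m_def by (metis imageI in_set_conv_nth)
      have "list_decode (alg_h P t) ! j \<in> FF j"
        using dec[OF j(1)] mem[OF j(1)] j(2) t by simp
      then have "\<exists>j. j < m \<and> list_decode (alg_h P t) ! j \<in> FF j"
        using j(1) by blast
      then have "(SOME j. j < m \<and> list_decode (alg_h P t) ! j \<in> FF j) < m \<and>
          list_decode (alg_h P t) ! (SOME j. j < m \<and> list_decode (alg_h P t) ! j \<in> FF j) \<in>
            FF (SOME j. j < m \<and> list_decode (alg_h P t) ! j \<in> FF j)"
        by (rule someI_ex)
      then show ?thesis using dec mem t unfolding Fp_def by auto
    qed
    then show ii unfolding ii_def using AP by blast
  qed
  show ?thesis using i_ii ii_i ii_iii iii_iv iv_v v_ii by blast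
qed

end
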